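(* An exceptional graph has no cycle whose length is divisible by $3$.
   Context: All graphs are finite and simple. Let $r$ be a degree-$2$ vertex of a graph $G$. $G$ is an exceptional graph with root $r$ if there is a sequence $(G_0,x_0,y_0),\ldots,(G_n,x_n,y_n)$, $n\ge 0$, with $G_0=K_{2,3}$, $G_n=G$, such that for each $i$ the vertices $r,x_i,y_i$ are distinct degree-$2$ vertices of $G_i$, and for each $i<n$: (1) if $x_iy_i\notin E(G_i)$, $G_{i+1}$ is obtained from $G_i$ by adding a new path of length $3$ joining $x_i$ and $y_i$; (2) if $x_iy_i\in E(G_i)$, $G_{i+1}$ is obtained from $G_i$ either by adding a new vertex $v$ with $N_{G_{i+1}}(v)=N_{G_i}(w)$ for some $w\in\{x_i,y_i\}$, or by adding a new $4$-cycle $abcda$ and the edges $ax_i,cy_i$. A graph is exceptional if it is an exceptional graph with some root. *)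

theory Defs
  imports Main
begin

definition simple_graph :: "'a set \<Rightarrow> 'a set set \<Rightarrow> bool" where
  "simple_graph V E \<longleftrightarrow> finite V \<and> (\<forall>e\<in>E. \<exists>u v. e = {u, v} \<and> u \<noteq> v \<and> u \<in> V \<and> v \<in> V)"

definition nbrs :: "'a set set \<Rightarrow> 'a \<Rightarrow> 'a set" where
  "nbrs E v = {u. {v, u} \<in> E}"

definition degree :: "'a set set \<Rightarrow> 'a \<Rightarrow> nat" where
  "degree E v = card (nbrs E v)"

definition K23_edges :: "'a \<Rightarrow> 'a \<Rightarrow> 'a \<Rightarrow> 'a \<Rightarrow> 'a \<Rightarrow> 'a set set" where
  "K23_edges a1 a2 b1 b2 b3 =
     {{a1, b1}, {a1, b2}, {a1, b3}, {a2, b1}, {a2, b2}, {a2, b3}}"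

text \<open>exc_seq V E r: (V,E) is the last graph G_n of a sequence as in the definition,
  where the conditions on (x_i, y_i) for i < n have been checked at each step.\<close>
inductive exc_seq :: "'a set \<Rightarrow> 'a set set \<Rightarrow> 'a \<Rightarrow> bool" where
  base: "distinct [a1, a2, b1, b2, b3] \<Longrightarrow>
    exc_seq {a1, a2, b1, b2, b3} (K23_edges a1 a2 b1 b2 b3) r"
| path3: "\<lbrakk> exc_seq V E r; r \<in> V; x \<in> V; y \<in> V; distinct [r, x, y];
      degree E r = 2; degree E x = 2; degree E y = 2;
      {x, y} \<notin> E; a \<notin> V; b \<notin> V; a \<noteq> b \<rbrakk> \<Longrightarrow>
    exc_seq (V \<union> {a, b}) (E \<union> {{x, a}, {a, b}, {b, y}}) r"
| twin: "\<lbrakk> exc_seq V E r; r \<in> V; x \<in> V; y \<in> V; distinct [r, x, y];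
      degree E r = 2; degree E x = 2; degree E y = 2;
      {x, y} \<in> E; w \<in> {x, y}; v \<notin> V \<rbrakk> \<Longrightarrow>
    exc_seq (insert v V) (E \<union> {{v, u} | u. u \<in> nbrs E w}) r"
| cycle4: "\<lbrakk> exc_seq V E r; r \<in> V; x \<in> V; y \<in> V; distinct [r, x, y];
      degree E r = 2; degree E x = 2; degree E y = 2;
      {x, y} \<in> E; distinct [a, b, c, d]; a \<notin> V; b \<notin> V; c \<notin> V; d \<notin> V \<rbrakk> \<Longrightarrow>
    exc_seq (V \<union> {a, b, c, d})
      (E \<union> {{a, b}, {b, c}, {c, d}, {d, a}, {a, x}, {c, y}}) r"

text \<open>The final graph G_n must also contain distinct degree-2 vertices r, x_n, y_n.\<close>
definition exceptional_root :: "'a set \<Rightarrow> 'a set set \<Rightarrow> 'a \<Rightarrow> bool" where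
  "exceptional_root V E r \<longleftrightarrow> exc_seq V E r \<and> r \<in> V \<and> degree E r = 2 \<and>
     (\<exists>x y. x \<in> V \<and> y \<in> V \<and> distinct [r, x, y] \<and> degree E x = 2 \<and> degree E y = 2)"

definition exceptional :: "'a set \<Rightarrow> 'a set set \<Rightarrow> bool" where
  "exceptional V E \<longleftrightarrow> (\<exists>r. exceptional_root V E r)"

definition is_cycle :: "'a set \<Rightarrow> 'a set set \<Rightarrow> 'a list \<Rightarrow> bool" where
  "is_cycle V E cs \<longleftrightarrow> length cs \<ge> 3 \<and> distinct cs \<and> set cs \<subseteq> V \<and>
     (\<forall>i < length cs. {cs ! i, cs ! ((i + 1) mod length cs)} \<in> E)"

end

theory Submission
  imports Defs
begin


fun walk :: "'a set set \<Rightarrow> 'a list \<Rightarrow> bool" where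
  "walk E [] = True"
| "walk E [x] = True"
| "walk E (x # y # xs) = ({x, y} \<in> E \<and> walk E (y # xs))"

lemma walk_Cons: "walk E (x # xs) \<longleftrightarrow> walk E xs \<and> (xs \<noteq> [] \<longrightarrow> {x, hd xs} \<in> E)"
  by (cases xs) auto

lemma walk_append: "walk E (xs @ ys) \<longleftrightarrow> walk E xs \<and> walk E ys \<and> (xs \<noteq> [] \<longrightarrow> ys \<noteq> [] \<longrightarrow> {last xs, hd ys} \<in> E)"
  by (induction xs) (auto simp: walk_Cons)

lemma walk_rev: "walk E (rev xs) \<longleftrightarrow> walk E xs"
  by (induction xs) (auto simp: walk_append walk_Cons hd_rev last_rev insert_commute)

lemma walk_nth: "walk E xs \<longleftrightarrow> (\<forall>i. Suc i < length xs \<longrightarrow> {xs ! i, xs ! Suc i} \<in> E)"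
proof (induction xs)
  case Nil then show ?case by simp
next
  case (Cons x xs)
  show ?case
  proof (cases xs)
    case Nil then show ?thesis by simp
  next
    case (Cons y ys)
    have "(\<forall>i. Suc i < length (x # xs) \<longrightarrow> {(x # xs) ! i, (x # xs) ! Suc i} \<in> E) \<longleftrightarrow>
          {x, y} \<in> E \<and> (\<forall>i. Suc i < length xs \<longrightarrow> {xs ! i, xs ! Suc i} \<in> E)"
      using Cons by (auto simp: All_less_Suc2 less_Suc_eq_0_disj)
    then show ?thesis using Cons.IH Cons by simp
  qed
qed

lemma walk_restrict: "walk E' xs \<Longrightarrow> set xs \<subseteq> V \<Longrightarrow> (\<forall>u w. u \<in> V \<longrightarrow> w \<in> V \<longrightarrow> {u, w} \<in> E' \<longrightarrow> {u, w} \<in> E) \<Longrightarrow> walk E xs"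
  by (induction E' xs rule: walk.induct) auto

lemma walk_map: "walk E' xs \<Longrightarrow> (\<forall>u w. u \<in> set xs \<longrightarrow> w \<in> set xs \<longrightarrow> {u, w} \<in> E' \<longrightarrow> {f u, f w} \<in> E) \<Longrightarrow> walk E (map f xs)"
  by (induction E' xs rule: walk.induct) auto

definition cyc :: "'a set \<Rightarrow> 'a set set \<Rightarrow> 'a list \<Rightarrow> bool" where
  "cyc V E cs \<longleftrightarrow> 3 \<le> length cs \<and> distinct cs \<and> set cs \<subseteq> V \<and> walk E cs \<and> {last cs, hd cs} \<in> E"

lemma is_cycle_cyc: "is_cycle V E cs \<Longrightarrow> cyc V E cs"
proof -
  assume c: "is_cycle V E cs"
  then have l: "length cs \<ge> 3" and all: "\<forall>i < length cs. {cs ! i, cs ! ((i + 1) mod length cs)} \<in> E"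
    by (auto simp: is_cycle_def)
  have "walk E cs" unfolding walk_nth
  proof (intro allI impI)
    fix i assume "Suc i < length cs"
    then show "{cs ! i, cs ! Suc i} \<in> E" using all[rule_format, of i] by simp
  qed
  moreover have "{last cs, hd cs} \<in> E"
  proof -
    have "{cs ! (length cs - 1), cs ! ((length cs - 1 + 1) mod length cs)} \<in> E"
      using all l by auto
    moreover have "length cs - 1 + 1 = length cs" using l by simp
    then have "(length cs - 1 + 1) mod length cs = 0" by simp
    moreover have "cs \<noteq> []" using l by auto
    ultimately show ?thesis by (simp add: last_conv_nth hd_conv_nth)
  qed
  ultimately show ?thesis using c by (auto simp: is_cycle_def cyc_def)
qed

lemma cyc_rotate_to:
  assumes "cyc V E cs" "v \<in> set cs"
  shows "\<exists>R. cyc V E (v # R) \<and> length R + 1 = length cs \<and> set (v # R) = set cs"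
proof -
  obtain xs ys where cs: "cs = xs @ v # ys" using assms(2) by (meson split_list)
  have c: "3 \<le> length cs" "distinct cs" "set cs \<subseteq> V" "walk E cs" "{last cs, hd cs} \<in> E"
    using assms(1) by (auto simp: cyc_def)
  have "cyc V E (v # ys @ xs)"
  proof (cases "xs = []")
    case True then show ?thesis using c cs by (simp add: cyc_def)
  next
    case False
    have w1: "walk E (v # ys)" and w2: "walk E xs" and e1: "{last xs, v} \<in> E"
      using c(4) False unfolding cs walk_append by auto
    have "walk E ((v # ys) @ xs)" unfolding walk_append
      using w1 w2 c(5) False cs by (auto simp: last_append)
    moreover have "{last (v # ys @ xs), v} \<in> E" using e1 False by simp
    ultimately show ?thesis using c cs by (auto simp: cyc_def)
  qed
  then show ?thesis using cs by (intro exI[of _ "ys @ xs"]) auto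
qed

lemma cyc_rev: "cyc V E (v # R) \<Longrightarrow> cyc V E (v # rev R)"
  unfolding cyc_def
  by (cases "R = []") (auto simp: walk_Cons walk_rev hd_rev last_rev insert_commute)

lemma cyc_nbrs: "cyc V E (v # R) \<Longrightarrow> {v, hd R} \<in> E \<and> {v, last R} \<in> E \<and> hd R \<noteq> last R \<and> 2 \<le> length R \<and> v \<notin> set R \<and> distinct R"
proof -
  assume c: "cyc V E (v # R)"
  then have "R \<noteq> []" by (auto simp: cyc_def)
  moreover have "2 \<le> length R" using c by (auto simp: cyc_def)
  moreover have "hd R \<noteq> last R"
  proof
    assume "hd R = last R"
    moreover have "distinct R" using c by (auto simp: cyc_def)
    ultimately have "(0::nat) = length R - 1" using \<open>R \<noteq> []\<close>
      by (simp add: hd_conv_nth last_conv_nth nth_eq_iff_index_eq)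
    then show False using \<open>2 \<le> length R\<close> by simp
  qed
  ultimately show ?thesis using c by (auto simp: cyc_def walk_Cons insert_commute)
qed



definition wfg :: "'a set \<Rightarrow> 'a set set \<Rightarrow> bool" where
  "wfg V E \<longleftrightarrow> finite V \<and> (\<forall>e\<in>E. \<exists>u w. e = {u, w} \<and> u \<noteq> w \<and> u \<in> V \<and> w \<in> V)"

definition NC :: "'a set \<Rightarrow> 'a set set \<Rightarrow> bool" where
  "NC V E \<longleftrightarrow> (\<forall>cs. cyc V E cs \<longrightarrow> length cs mod 3 \<noteq> 0)"

definition TP :: "'a set \<Rightarrow> 'a set set \<Rightarrow> 'a \<Rightarrow> 'a \<Rightarrow> bool" where
  "TP V E s t \<longleftrightarrow> (\<forall>P. distinct P \<longrightarrow> walk E P \<longrightarrow> set P \<subseteq> V \<longrightarrow> P \<noteq> [] \<longrightarrow> hd P = s \<longrightarrow> last P = t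
      \<longrightarrow> length P mod 3 \<noteq> 1)"

definition Inv :: "'a set \<Rightarrow> 'a set set \<Rightarrow> 'a \<Rightarrow> bool" where
  "Inv V E r \<longleftrightarrow> wfg V E \<and> (\<forall>u\<in>V. 2 \<le> degree E u) \<and> NC V E \<and>
    (\<exists>t1 t2. t1 \<noteq> t2 \<and> {u\<in>V. u \<noteq> r \<and> degree E u = 2} = {t1, t2} \<and> ({t1, t2} \<notin> E \<longrightarrow> TP V E t1 t2))"

lemma wf_edge: "wfg V E \<Longrightarrow> {u, w} \<in> E \<Longrightarrow> u \<in> V \<and> w \<in> V \<and> u \<noteq> w"
  unfolding wfg_def by (metis doubleton_eq_iff)

lemma wf_nbrs: "wfg V E \<Longrightarrow> nbrs E u \<subseteq> V"
  unfolding nbrs_def using wf_edge by fastforce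

lemma wf_nbrs_finite: "wfg V E \<Longrightarrow> finite (nbrs E u)"
  using wf_nbrs wfg_def finite_subset by metis

lemma TP_sym: "TP V E s t \<Longrightarrow> TP V E t s"
  unfolding TP_def
proof (intro allI impI)
  fix P assume T: "\<forall>P. distinct P \<longrightarrow> walk E P \<longrightarrow> set P \<subseteq> V \<longrightarrow> P \<noteq> [] \<longrightarrow> hd P = s \<longrightarrow> last P = t \<longrightarrow> length P mod 3 \<noteq> 1"
    and "distinct P" "walk E P" "set P \<subseteq> V" "P \<noteq> []" "hd P = t" "last P = s"
  then show "length P mod 3 \<noteq> 1" using T[rule_format, of "rev P"]
    by (simp add: walk_rev hd_rev last_rev)
qed

lemma parity:
  "walk E xs \<Longrightarrow> xs \<noteq> [] \<Longrightarrow> \<forall>e\<in>E. \<exists>u w. e = {u, w} \<and> u \<in> A \<and> w \<notin> A \<Longrightarrow>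
   (last xs \<in> A \<longleftrightarrow> (hd xs \<in> A \<longleftrightarrow> odd (length xs)))"
proof (induction E xs rule: walk.induct)
  case (3 E x y xs)
  have "{x, y} \<in> E" using 3 by simp
  then obtain u w where "{x, y} = {u, w}" "u \<in> A" "w \<notin> A" using 3(4) by blast
  then have h1: "x \<in> A \<longleftrightarrow> y \<notin> A" by (auto simp: doubleton_eq_iff)
  have h2: "last (y # xs) \<in> A \<longleftrightarrow> (y \<in> A \<longleftrightarrow> odd (length (y # xs)))" using 3 by simp
  have h3: "last (x # y # xs) = last (y # xs)" "hd (x # y # xs) = x"
    "odd (length (x # y # xs)) \<longleftrightarrow> \<not> odd (length (y # xs))" by simp_all
  show ?case unfolding h3 using h1 h2 by blast
qed auto

lemma K23_nbrs:
  assumes "distinct [a1, a2, b1, b2, b3]"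
  shows "nbrs (K23_edges a1 a2 b1 b2 b3) a1 = {b1, b2, b3}"
    "nbrs (K23_edges a1 a2 b1 b2 b3) a2 = {b1, b2, b3}"
    "nbrs (K23_edges a1 a2 b1 b2 b3) b1 = {a1, a2}"
    "nbrs (K23_edges a1 a2 b1 b2 b3) b2 = {a1, a2}"
    "nbrs (K23_edges a1 a2 b1 b2 b3) b3 = {a1, a2}"
  using assms unfolding nbrs_def K23_edges_def by (auto simp: doubleton_eq_iff)

lemma base_inv1:
  assumes d: "distinct [a1, a2, b1, b2, b3]"
  shows "Inv {a1, a2, b1, b2, b3} (K23_edges a1 a2 b1 b2 b3) b1"
proof -
  let ?V = "{a1, a2, b1, b2, b3}" and ?E = "K23_edges a1 a2 b1 b2 b3"
  have deg: "degree ?E a1 = 3" "degree ?E a2 = 3" "degree ?E b1 = 2" "degree ?E b2 = 2" "degree ?E b3 = 2"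
    using K23_nbrs[OF d] d by (auto simp: degree_def)
  have wfg: "wfg ?V ?E" using d unfolding wfg_def K23_edges_def by auto
  have bip: "\<forall>e\<in>?E. \<exists>u w. e = {u, w} \<and> u \<in> {a1, a2} \<and> w \<notin> {a1, a2}"
    using d unfolding K23_edges_def by auto
  have cardV: "card ?V = 5" using d by simp
  have NC: "NC ?V ?E" unfolding NC_def
  proof (intro allI impI)
    fix cs assume c: "cyc ?V ?E cs"
    then have "length cs = card (set cs)" "set cs \<subseteq> ?V" by (auto simp: cyc_def distinct_card)
    moreover have "card (set cs) \<le> card ?V" by (rule card_mono) (use calculation in auto)
    ultimately have "length cs \<le> 5" using cardV by simp
    moreover have "even (length cs)"
    proof -
      have "cs \<noteq> []" using c by (auto simp: cyc_def)
      moreover have "walk ?E cs" "{last cs, hd cs} \<in> ?E" using c by (auto simp: cyc_def)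
      ultimately have p: "last cs \<in> {a1, a2} \<longleftrightarrow> (hd cs \<in> {a1, a2} \<longleftrightarrow> odd (length cs))"
        and cl: "{last cs, hd cs} \<in> ?E"
        using parity[OF _ _ bip] by blast+
      obtain u w where "{last cs, hd cs} = {u, w}" "u \<in> {a1, a2}" "w \<notin> {a1, a2}" using bip cl by blast
      then have "last cs \<in> {a1, a2} \<longleftrightarrow> hd cs \<notin> {a1, a2}" unfolding doubleton_eq_iff by blast
      then show ?thesis using p by blast
    qed
    moreover have "3 \<le> length cs" using c by (auto simp: cyc_def)
    ultimately have "length cs = 4" by presburger
    then show "length cs mod 3 \<noteq> 0" by simp
  qed
  have TP: "TP ?V ?E b2 b3" unfolding TP_def
  proof (intro allI impI)
    fix P assume P: "distinct P" "walk ?E P" "set P \<subseteq> ?V" "P \<noteq> []" "hd P = b2" "last P = b3"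
    then have "length P = card (set P)" by (auto simp: distinct_card)
    moreover have "card (set P) \<le> card ?V" by (rule card_mono) (use P in auto)
    ultimately have "length P \<le> 5" using cardV by simp
    moreover have "b2 \<notin> {a1, a2}" "b3 \<notin> {a1, a2}" using d by auto
    then have "odd (length P)" using parity[OF P(2,4) bip] P(5,6) by simp
    moreover have "length P \<noteq> 1"
    proof
      assume "length P = 1"
      then have "hd P = last P" by (cases P) auto
      then show False using P d by simp
    qed
    ultimately have "length P = 3 \<or> length P = 5" by presburger
    then show "length P mod 3 \<noteq> 1" by auto
  qed
  have T: "{u \<in> ?V. u \<noteq> b1 \<and> degree ?E u = 2} = {b2, b3}" using deg d by auto
  have "{b2, b3} \<notin> ?E" using d unfolding K23_edges_def by (auto simp: doubleton_eq_iff)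
  have md: "\<forall>u\<in>?V. 2 \<le> degree ?E u" using deg by auto
  have "b2 \<noteq> b3" using d by simp
  show ?thesis unfolding Inv_def using wfg NC TP T md \<open>{b2, b3} \<notin> ?E\<close> \<open>b2 \<noteq> b3\<close> by blast
qed

lemma base_inv:
  assumes d: "distinct [a1, a2, b1, b2, b3]" and r: "r \<in> {a1, a2, b1, b2, b3}" "degree (K23_edges a1 a2 b1 b2 b3) r = 2"
  shows "Inv {a1, a2, b1, b2, b3} (K23_edges a1 a2 b1 b2 b3) r"
proof -
  have "r = b1 \<or> r = b2 \<or> r = b3" using r K23_nbrs[OF d] d by (auto simp: degree_def)
  moreover have "K23_edges a1 a2 b1 b2 b3 = K23_edges a1 a2 b2 b1 b3" "K23_edges a1 a2 b1 b2 b3 = K23_edges a1 a2 b3 b2 b1"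
    by (auto simp: K23_edges_def)
  moreover have "{a1, a2, b1, b2, b3} = {a1, a2, b2, b1, b3}" "{a1, a2, b1, b2, b3} = {a1, a2, b3, b2, b1}" by auto
  moreover have "distinct [a1, a2, b2, b1, b3]" "distinct [a1, a2, b3, b2, b1]" using d by auto
  ultimately show ?thesis using base_inv1[OF d] base_inv1[of a1 a2 b2 b1 b3] base_inv1[of a1 a2 b3 b2 b1]
    by (elim disjE) simp_all
qed



lemma nbrs_iff: "u \<in> nbrs E v \<longleftrightarrow> {v, u} \<in> E" by (simp add: nbrs_def)

lemma cyc_restrict: "cyc V' E' cs \<Longrightarrow> set cs \<subseteq> V \<Longrightarrow> (\<forall>u w. u \<in> V \<longrightarrow> w \<in> V \<longrightarrow> {u, w} \<in> E' \<longrightarrow> {u, w} \<in> E) \<Longrightarrow> cyc V E cs"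
proof -
  assume c: "cyc V' E' cs" and s: "set cs \<subseteq> V" and o: "\<forall>u w. u \<in> V \<longrightarrow> w \<in> V \<longrightarrow> {u, w} \<in> E' \<longrightarrow> {u, w} \<in> E"
  have ne: "cs \<noteq> []" using c by (auto simp: cyc_def)
  have "last cs \<in> V" "hd cs \<in> V" using s ne by auto
  then have "{last cs, hd cs} \<in> E" using o c by (auto simp: cyc_def)
  moreover have "walk E cs" using walk_restrict[of E' cs V E] c s o by (auto simp: cyc_def)
  ultimately show ?thesis using c s by (auto simp: cyc_def)
qed

lemma cyc_oriented:
  assumes "cyc V E cs" "v \<in> set cs" "nbrs E v = {p, q}"
  shows "\<exists>R. cyc V E (v # R) \<and> hd R = p \<and> last R = q \<and> length R + 1 = length cs \<and> set (v # R) = set cs"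
proof -
  obtain R where R: "cyc V E (v # R)" "length R + 1 = length cs" "set (v # R) = set cs"
    using cyc_rotate_to[OF assms(1,2)] by blast
  have n: "hd R \<in> {p, q}" "last R \<in> {p, q}" "hd R \<noteq> last R" "R \<noteq> []"
    using cyc_nbrs[OF R(1)] assms(3) by (auto simp: nbrs_def)
  show ?thesis
  proof (cases "hd R = p")
    case True
    then have "last R = q" using n by auto
    then show ?thesis using R True by blast
  next
    case False
    then have "hd R = q" "last R = p" using n by auto
    then have "cyc V E (v # rev R)" "hd (rev R) = p" "last (rev R) = q"
      using cyc_rev[OF R(1)] n by (auto simp: hd_rev last_rev)
    then show ?thesis using R by (intro exI[of _ "rev R"]) auto
  qed
qed

lemma cyc_parts: "cyc V E (v # R) \<Longrightarrow> walk E R \<and> distinct R \<and> v \<notin> set R \<and> set R \<subseteq> V \<and> v \<in> V \<and> R \<noteq> []"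
  unfolding cyc_def by (auto simp: walk_Cons)

lemma terminals_eq:
  assumes "{u\<in>V. u \<noteq> r \<and> degree E u = 2} = {t1, t2}" "x \<in> V" "y \<in> V" "distinct [r, x, y]"
    "degree E x = 2" "degree E y = 2"
  shows "{x, y} = {t1, t2}"
proof -
  have "x \<in> {u\<in>V. u \<noteq> r \<and> degree E u = 2}" "y \<in> {u\<in>V. u \<noteq> r \<and> degree E u = 2}"
    using assms(2-6) by auto
  then have "x \<in> {t1, t2}" "y \<in> {t1, t2}" unfolding assms(1) .
  then show ?thesis using assms(4) by auto
qed

lemma step_path3:
  assumes I: "Inv V E r" and r: "r \<in> V" and xy: "x \<in> V" "y \<in> V" "distinct [r, x, y]"
    "degree E x = 2" "degree E y = 2" "{x, y} \<notin> E"
    and ab: "a \<notin> V" "b \<notin> V" "a \<noteq> b"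
  shows "Inv (V \<union> {a, b}) (E \<union> {{x, a}, {a, b}, {b, y}}) r"
proof -
  let ?V = "V \<union> {a, b}" and ?E = "E \<union> {{x, a}, {a, b}, {b, y}}"
  obtain t1 t2 where wf: "wfg V E" and md: "\<forall>u\<in>V. 2 \<le> degree E u" and nc: "NC V E"
    and T: "t1 \<noteq> t2" "{u\<in>V. u \<noteq> r \<and> degree E u = 2} = {t1, t2}" "{t1, t2} \<notin> E \<longrightarrow> TP V E t1 t2"
    using I unfolding Inv_def by blast
  have "{x, y} = {t1, t2}" using terminals_eq[OF T(2) xy(1-5)] .
  then have tp: "TP V E y x" using T(3) xy(6) TP_sym by (metis doubleton_eq_iff)
  have ne: "x \<noteq> a" "x \<noteq> b" "y \<noteq> a" "y \<noteq> b" "r \<noteq> a" "r \<noteq> b" using xy ab r by auto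
  have wf': "wfg ?V ?E" unfolding wfg_def
  proof (intro conjI ballI)
    show "finite ?V" using wf by (simp add: wfg_def)
  next
    fix e assume "e \<in> ?E"
    then show "\<exists>u w. e = {u, w} \<and> u \<noteq> w \<and> u \<in> ?V \<and> w \<in> ?V"
    proof
      assume "e \<in> E" then show ?thesis using wf unfolding wfg_def by blast
    next
      assume "e \<in> {{x, a}, {a, b}, {b, y}}" then show ?thesis using xy ab ne by auto
    qed
  qed
  have old: "\<forall>u w. u \<in> V \<longrightarrow> w \<in> V \<longrightarrow> {u, w} \<in> ?E \<longrightarrow> {u, w} \<in> E"
    using ab by (auto simp: doubleton_eq_iff)
  have na: "nbrs ?E a = {x, b}" using wf_edge[OF wf] ab ne by (auto simp: nbrs_def doubleton_eq_iff)
  have na': "nbrs ?E a = {b, x}" using na by (simp add: insert_commute)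
  have nb: "nbrs ?E b = {a, y}" using wf_edge[OF wf] ab ne by (auto simp: nbrs_def doubleton_eq_iff)
  have nx: "nbrs ?E x = insert a (nbrs E x)" using wf_edge[OF wf] ab ne xy by (auto simp: nbrs_def doubleton_eq_iff)
  have ny: "nbrs ?E y = insert b (nbrs E y)" using wf_edge[OF wf] ab ne xy by (auto simp: nbrs_def doubleton_eq_iff)
  have nu: "nbrs ?E u = nbrs E u" if "u \<in> V" "u \<noteq> x" "u \<noteq> y" for u
    using that ab by (auto simp: nbrs_def doubleton_eq_iff)
  have "a \<notin> nbrs E x" "b \<notin> nbrs E y" using wf_nbrs[OF wf] ab by auto
  then have dx: "degree ?E x = 3" and dy: "degree ?E y = 3"
    using xy nx ny wf_nbrs_finite[OF wf] by (auto simp: degree_def)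
  have da: "degree ?E a = 2" and db: "degree ?E b = 2" using na nb ne by (auto simp: degree_def)
  have du: "degree ?E u = degree E u" if "u \<in> V" "u \<noteq> x" "u \<noteq> y" for u
    using nu[OF that] by (simp add: degree_def)
  have md': "\<forall>u\<in>?V. 2 \<le> degree ?E u"
  proof
    fix u assume "u \<in> ?V"
    then show "2 \<le> degree ?E u" using md dx dy da db du[of u] by (cases "u = x \<or> u = y") auto
  qed
  have T': "{u\<in>?V. u \<noteq> r \<and> degree ?E u = 2} = {a, b}"
  proof (intro equalityI subsetI)
    fix u assume u: "u \<in> {u\<in>?V. u \<noteq> r \<and> degree ?E u = 2}"
    show "u \<in> {a, b}"
    proof (rule ccontr)
      assume "u \<notin> {a, b}"
      then have "u \<in> V" "u \<noteq> x" "u \<noteq> y" using u dx dy by auto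
      then have "u \<in> {t1, t2}" using u du T(2) by auto
      then show False using \<open>{x, y} = {t1, t2}\<close> \<open>u \<noteq> x\<close> \<open>u \<noteq> y\<close> by auto
    qed
  next
    fix u assume "u \<in> {a, b}"
    then show "u \<in> {u\<in>?V. u \<noteq> r \<and> degree ?E u = 2}" using da db ne by auto
  qed
  have nc': "NC ?V ?E" unfolding NC_def
  proof (intro allI impI)
    fix cs assume c: "cyc ?V ?E cs"
    show "length cs mod 3 \<noteq> 0"
    proof (cases "set cs \<subseteq> V")
      case True
      then show ?thesis using cyc_restrict[OF c True old] nc by (auto simp: NC_def)
    next
      case False
      then have "a \<in> set cs \<or> b \<in> set cs" using c by (auto simp: cyc_def)
      have ain: "a \<in> set cs"
      proof (cases "a \<in> set cs")
        case False
        then have "b \<in> set cs" using \<open>a \<in> set cs \<or> b \<in> set cs\<close> by simp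
        then obtain R where R: "cyc ?V ?E (b # R)" "hd R = a" "set (b # R) = set cs"
          using cyc_oriented[OF c _ nb] by blast
        then have "a \<in> set R" using cyc_parts[OF R(1)] by auto
        then show ?thesis using R(3) by auto
      qed
      obtain R where R: "cyc ?V ?E (a # R)" "hd R = b" "last R = x" "length R + 1 = length cs"
        using cyc_oriented[OF c ain na'] by blast
      obtain R2 where R2: "R = b # R2" using R(2) cyc_parts[OF R(1)] by (cases R) auto
      have p: "walk ?E (b # R2)" "distinct (a # b # R2)" "set (b # R2) \<subseteq> ?V"
        using cyc_parts[OF R(1)] R2 by auto
      have "R2 \<noteq> []" using R(3) R2 ne by auto
      then have "{b, hd R2} \<in> ?E" using p(1) by (simp add: walk_Cons)
      then have "hd R2 \<in> {a, y}" unfolding nb[symmetric] nbrs_iff .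
      then have h: "hd R2 = y" using p(2) \<open>R2 \<noteq> []\<close> by (auto dest: hd_in_set)
      have s: "set R2 \<subseteq> V" using p(2,3) by auto
      have w: "walk E R2" using walk_restrict[OF _ s old] p(1) by (simp add: walk_Cons)
      have "last R2 = x" using R(3) R2 \<open>R2 \<noteq> []\<close> by simp
      then have "length R2 mod 3 \<noteq> 1" using tp w s h p(2) \<open>R2 \<noteq> []\<close> unfolding TP_def by auto
      moreover have "length cs = length R2 + 2" using R(4) R2 by simp
      ultimately show ?thesis by presburger
    qed
  qed
  have "{a, b} \<in> ?E" by simp
  then show ?thesis unfolding Inv_def using wf' md' nc' T' ab by blast
qed



lemma hd_last_distinct: "distinct xs \<Longrightarrow> xs \<noteq> [] \<Longrightarrow> hd xs = last xs \<Longrightarrow> length xs = 1"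
proof (cases xs)
  case (Cons x ys)
  assume "distinct xs" "hd xs = last xs"
  then show ?thesis using Cons by (cases "ys = []") auto
qed simp

lemma card2_obtain: "card S = 2 \<Longrightarrow> o1 \<in> S \<Longrightarrow> \<exists>z. S = {o1, z} \<and> z \<noteq> o1"
  by (metis card_2_iff doubleton_eq_iff insertE singletonD)

lemma step_twin:
  assumes I: "Inv V E r" and r: "r \<in> V" and xy: "w \<in> V" "o1 \<in> V" "distinct [r, w, o1]"
    "degree E w = 2" "degree E o1 = 2" "{w, o1} \<in> E" and v: "v \<notin> V"
  shows "Inv (insert v V) (E \<union> {{v, u} | u. u \<in> nbrs E w}) r"
proof -
  obtain t1 t2 where wf: "wfg V E" and md: "\<forall>u\<in>V. 2 \<le> degree E u" and nc: "NC V E"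
    and T: "t1 \<noteq> t2" "{u\<in>V. u \<noteq> r \<and> degree E u = 2} = {t1, t2}" "{t1, t2} \<notin> E \<longrightarrow> TP V E t1 t2"
    using I unfolding Inv_def by blast
  have wo: "{w, o1} = {t1, t2}" using terminals_eq[OF T(2) xy(1-5)] .
  have "o1 \<in> nbrs E w" using xy(6) by (simp add: nbrs_def)
  then obtain z where nw: "nbrs E w = {o1, z}" and zo: "z \<noteq> o1"
    using card2_obtain xy(4) unfolding degree_def by metis
  have "{w, z} \<in> E" using nw by (auto simp: nbrs_def)
  then have z: "z \<in> V" "z \<noteq> w" using wf_edge[OF wf] by auto
  have ne: "v \<noteq> w" "v \<noteq> o1" "v \<noteq> z" "v \<noteq> r" "w \<noteq> o1" "w \<noteq> r" "o1 \<noteq> r" using xy v z r by auto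
  have Eeq: "E \<union> {{v, u} | u. u \<in> nbrs E w} = E \<union> {{v, o1}, {v, z}}" using nw by auto
  let ?V = "insert v V" and ?E = "E \<union> {{v, o1}, {v, z}}"
  have wf': "wfg ?V ?E" unfolding wfg_def
  proof (intro conjI ballI)
    show "finite ?V" using wf by (simp add: wfg_def)
  next
    fix e assume "e \<in> ?E"
    then show "\<exists>u w. e = {u, w} \<and> u \<noteq> w \<and> u \<in> ?V \<and> w \<in> ?V"
    proof
      assume "e \<in> E" then show ?thesis using wf unfolding wfg_def by blast
    next
      assume "e \<in> {{v, o1}, {v, z}}" then show ?thesis using xy z ne by auto
    qed
  qed
  have old: "\<forall>u w. u \<in> V \<longrightarrow> w \<in> V \<longrightarrow> {u, w} \<in> ?E \<longrightarrow> {u, w} \<in> E"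
    using v by (auto simp: doubleton_eq_iff)
  have nv: "nbrs ?E v = {o1, z}" using wf_edge[OF wf] v ne by (auto simp: nbrs_def doubleton_eq_iff)
  have nw': "nbrs ?E w = {o1, z}" using wf_edge[OF wf] v ne nw by (auto simp: nbrs_def doubleton_eq_iff)
  have no: "nbrs ?E o1 = insert v (nbrs E o1)" using wf_edge[OF wf] v ne zo by (auto simp: nbrs_def doubleton_eq_iff)
  have nz: "nbrs ?E z = insert v (nbrs E z)" using wf_edge[OF wf] v ne zo by (auto simp: nbrs_def doubleton_eq_iff)
  have nu: "nbrs ?E u = nbrs E u" if "u \<in> V" "u \<noteq> o1" "u \<noteq> z" for u
    using that v by (auto simp: nbrs_def doubleton_eq_iff)
  have "v \<notin> nbrs E o1" "v \<notin> nbrs E z" using wf_nbrs[OF wf] v by auto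
  then have do: "degree ?E o1 = 3" and dz: "degree ?E z = Suc (degree E z)"
    using xy no nz wf_nbrs_finite[OF wf] by (auto simp: degree_def)
  have dz3: "degree ?E z \<ge> 3" using dz md z by auto
  have dv: "degree ?E v = 2" and dw: "degree ?E w = 2" using nv nw' zo by (auto simp: degree_def)
  have du: "degree ?E u = degree E u" if "u \<in> V" "u \<noteq> o1" "u \<noteq> z" for u
    using nu[OF that] by (simp add: degree_def)
  have md': "\<forall>u\<in>?V. 2 \<le> degree ?E u"
  proof
    fix u assume "u \<in> ?V"
    then show "2 \<le> degree ?E u" using md do dz3 dv du[of u] by (cases "u = o1 \<or> u = z") auto
  qed
  have T': "{u\<in>?V. u \<noteq> r \<and> degree ?E u = 2} = {w, v}"
  proof (intro equalityI subsetI)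
    fix u assume u: "u \<in> {u\<in>?V. u \<noteq> r \<and> degree ?E u = 2}"
    show "u \<in> {w, v}"
    proof (rule ccontr)
      assume "u \<notin> {w, v}"
      then have "u \<in> V" "u \<noteq> o1" "u \<noteq> z" using u do dz3 by auto
      then have "u \<in> {t1, t2}" using u du T(2) by auto
      then show False using wo \<open>u \<noteq> o1\<close> \<open>u \<notin> {w, v}\<close> by auto
    qed
  next
    fix u assume "u \<in> {w, v}"
    then show "u \<in> {u\<in>?V. u \<noteq> r \<and> degree ?E u = 2}" using dv dw ne xy by auto
  qed
  have nwv: "{w, v} \<notin> ?E" using wf_edge[OF wf] v ne z by (auto simp: doubleton_eq_iff)
  have tp: "TP ?V ?E w v" unfolding TP_def
  proof (intro allI impI)
    fix P assume P: "distinct P" "walk ?E P" "set P \<subseteq> ?V" "P \<noteq> []" "hd P = w" "last P = v"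
    define P0 where "P0 = butlast P"
    have Pe: "P = P0 @ [v]" using P(4,6) unfolding P0_def by (metis append_butlast_last_id)
    have "P0 \<noteq> []" using Pe P(5) ne by auto
    have w0: "walk ?E P0" "{last P0, v} \<in> ?E" using P(2) \<open>P0 \<noteq> []\<close> unfolding Pe walk_append by auto
    have d0: "distinct P0" "v \<notin> set P0" using P(1) unfolding Pe by auto
    have s0: "set P0 \<subseteq> V" using P(3) d0(2) unfolding Pe by auto
    have w0': "walk E P0" using walk_restrict[OF w0(1) s0 old] .
    have l0: "last P0 \<in> {o1, z}" unfolding nv[symmetric] nbrs_iff using w0(2) by (simp add: insert_commute)
    then have cl: "{last P0, w} \<in> E" using nw by (auto simp: nbrs_def insert_commute)
    have h0: "hd P0 = w" using P(5) \<open>P0 \<noteq> []\<close> unfolding Pe by simp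
    have "length P0 \<noteq> 1"
    proof
      assume "length P0 = 1"
      then have "last P0 = hd P0" by (cases P0) auto
      then show False using l0 h0 ne zo z by auto
    qed
    moreover have "length P0 \<ge> 3 \<Longrightarrow> length P0 mod 3 \<noteq> 0"
      using nc d0 s0 w0' cl h0 unfolding NC_def cyc_def by auto
    moreover have "length P = length P0 + 1" using Pe by simp
    moreover have "length P0 \<noteq> 0" using \<open>P0 \<noteq> []\<close> by simp
    ultimately show "length P mod 3 \<noteq> 1" by presburger
  qed
  have nc': "NC ?V ?E" unfolding NC_def
  proof (intro allI impI)
    fix cs assume c: "cyc ?V ?E cs"
    show "length cs mod 3 \<noteq> 0"
    proof (cases "v \<in> set cs")
      case False
      then have "set cs \<subseteq> V" using c by (auto simp: cyc_def)
      then show ?thesis using cyc_restrict[OF c _ old] nc by (auto simp: NC_def)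
    next
      case vin: True
      show ?thesis
      proof (cases "w \<in> set cs")
        case False
        define f where "f u = (if u = v then w else u)" for u
        have edge: "{f u, f u'} \<in> E" if "u \<in> set cs" "u' \<in> set cs" "{u, u'} \<in> ?E" for u u'
        proof -
          have "u \<in> ?V" "u' \<in> ?V" "u \<noteq> u'" using wf_edge[OF wf' that(3)] by auto
          show ?thesis
          proof (cases "u = v \<or> u' = v")
            case True
            then show ?thesis
            proof
              assume "u = v"
              then have "u' \<in> {o1, z}" unfolding nv[symmetric] nbrs_iff using that(3) by simp
              then show ?thesis using nw \<open>u = v\<close> \<open>u \<noteq> u'\<close> unfolding f_def by (auto simp: nbrs_def)
            next
              assume "u' = v"
              then have "u \<in> {o1, z}" unfolding nv[symmetric] nbrs_iff using that(3) by (simp add: insert_commute)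
              then show ?thesis using nw \<open>u' = v\<close> \<open>u \<noteq> u'\<close> unfolding f_def by (auto simp: nbrs_def insert_commute)
            qed
          next
            case False
            then show ?thesis using old that \<open>u \<in> ?V\<close> \<open>u' \<in> ?V\<close> unfolding f_def by auto
          qed
        qed
        have cs: "3 \<le> length cs" "distinct cs" "set cs \<subseteq> ?V" "walk ?E cs" "{last cs, hd cs} \<in> ?E" "cs \<noteq> []"
          using c by (auto simp: cyc_def)
        have "inj_on f (set cs)" using False unfolding f_def inj_on_def by auto
        then have "distinct (map f cs)" using cs(2) by (simp add: distinct_map)
        moreover have "set (map f cs) \<subseteq> V" using cs(3) xy unfolding f_def by auto
        moreover have "walk E (map f cs)" using walk_map[OF cs(4)] edge by blast
        moreover have "{last (map f cs), hd (map f cs)} \<in> E"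
          using edge[OF _ _ cs(5)] cs(6) by (simp add: last_map hd_map)
        ultimately have "cyc V E (map f cs)" using cs(1) by (simp add: cyc_def)
        then show ?thesis using nc by (auto simp: NC_def)
      next
        case True
        obtain R where R: "cyc ?V ?E (w # R)" "hd R = o1" "last R = z" "length R + 1 = length cs"
          "set (w # R) = set cs"
          using cyc_oriented[OF c True nw'] by blast
        have Rp: "walk ?E R" "distinct R" "R \<noteq> []" using cyc_parts[OF R(1)] by auto
        have "v \<in> set R" using vin R(5) ne by auto
        then obtain R1 R2 where RR: "R = R1 @ v # R2" by (meson split_list)
        have "R1 \<noteq> []" using R(2) RR ne by auto
        have "R2 \<noteq> []" using R(3) RR ne by auto
        have e1: "{last R1, v} \<in> ?E" and e2: "{v, hd R2} \<in> ?E"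
          using Rp(1) \<open>R1 \<noteq> []\<close> \<open>R2 \<noteq> []\<close> unfolding RR walk_append by (auto simp: walk_Cons)
        have "last R1 \<in> {o1, z}" unfolding nv[symmetric] nbrs_iff using e1 by (simp add: insert_commute)
        moreover have "hd R2 \<in> {o1, z}" unfolding nv[symmetric] nbrs_iff using e2 by simp
        moreover have h1: "hd R1 = o1" using R(2) RR \<open>R1 \<noteq> []\<close> by simp
        moreover have l2: "last R2 = z" using R(3) RR \<open>R2 \<noteq> []\<close> by simp
        moreover have dR: "distinct R1" "distinct R2" "set R1 \<inter> set R2 = {}" using Rp(2) RR by auto
        moreover have "o1 \<in> set R1" using h1 hd_in_set[OF \<open>R1 \<noteq> []\<close>] by simp
        moreover have "z \<in> set R2" using l2 last_in_set[OF \<open>R2 \<noteq> []\<close>] by simp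
        moreover have "last R1 \<in> set R1" "hd R2 \<in> set R2"
          using hd_in_set[OF \<open>R2 \<noteq> []\<close>] last_in_set[OF \<open>R1 \<noteq> []\<close>] by auto
        ultimately have "hd R1 = last R1" "hd R2 = last R2" by auto
        then have "length R1 = 1" "length R2 = 1"
          using hd_last_distinct dR \<open>R1 \<noteq> []\<close> \<open>R2 \<noteq> []\<close> by auto
        then have "length cs = 4" using R(4) RR by simp
        then show ?thesis by simp
      qed
    qed
  qed
  have "w \<noteq> v" using ne by simp
  have "\<exists>t1 t2. t1 \<noteq> t2 \<and> {u\<in>?V. u \<noteq> r \<and> degree ?E u = 2} = {t1, t2} \<and> ({t1, t2} \<notin> ?E \<longrightarrow> TP ?V ?E t1 t2)"
    using T' tp \<open>w \<noteq> v\<close> by blast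
  then show ?thesis unfolding Eeq Inv_def using wf' md' nc' by blast
qed



lemma last_distinct_Cons: "distinct (u # xs) \<Longrightarrow> last (u # xs) = u \<Longrightarrow> xs = []"
  by (cases "xs = []") auto

lemma c4_core:
  assumes E': "E' = E \<union> {{a, b}, {b, c}, {c, d}, {d, a}, {a, x}, {c, y}}" and wf: "wfg V E"
    and new: "a \<notin> V" "b \<notin> V" "c \<notin> V" "d \<notin> V" and dist: "distinct [a, b, c, d]" and xy: "x \<in> V" "y \<in> V"
    and L: "walk E' L" "distinct L" "set L \<subseteq> V \<union> {a, b, c, d}" "a \<notin> set L" "b \<notin> set L" "L \<noteq> []"
      "hd L = x" "\<not> set L \<subseteq> V"
  shows "\<exists>Q rest. L = Q @ c # rest \<and> set Q \<subseteq> V \<and> Q \<noteq> [] \<and> hd Q = x \<and> last Q = y \<and> walk E Q \<and> distinct Q"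
proof -
  have "\<exists>n\<in>set L. n \<notin> V" using L(8) by auto
  then obtain Q n rest where sp: "L = Q @ n # rest" "n \<notin> V" "\<forall>q\<in>set Q. q \<in> V"
    using split_list_first_prop[of L "\<lambda>n. n \<notin> V"] by auto
  have "Q \<noteq> []" using sp L(6,7) xy by (cases Q) auto
  have "n \<in> {c, d}" using sp L(3-5) by auto
  have e: "{last Q, n} \<in> E'" using L(1) \<open>Q \<noteq> []\<close> unfolding sp walk_append by (simp add: walk_Cons)
  have lq: "last Q \<in> V" using sp(3) \<open>Q \<noteq> []\<close> by simp
  have "{last Q, n} \<notin> E" using wf_edge[OF wf] sp(2) by blast
  then have "n = c \<and> last Q = y" using e E' \<open>n \<in> {c, d}\<close> lq new dist by (auto simp: doubleton_eq_iff)
  moreover have "walk E Q"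
  proof -
    have "walk E' Q" using L(1) unfolding sp walk_append by simp
    moreover have "\<forall>u w. u \<in> V \<longrightarrow> w \<in> V \<longrightarrow> {u, w} \<in> E' \<longrightarrow> {u, w} \<in> E"
      using E' new by (auto simp: doubleton_eq_iff)
    ultimately show ?thesis using walk_restrict sp(3) by blast
  qed
  moreover have "hd Q = x" using L(7) \<open>Q \<noteq> []\<close> sp by simp
  moreover have "distinct Q" using L(2) sp by simp
  ultimately show ?thesis using sp \<open>Q \<noteq> []\<close> by blast
qed

lemma c4_Q:
  assumes "NC V E" "{x, y} \<in> E" "x \<noteq> y" "walk E Q" "distinct Q" "set Q \<subseteq> V" "Q \<noteq> []" "hd Q = x" "last Q = y"
  shows "length Q mod 3 \<noteq> 0"
proof -
  have "length Q \<noteq> 1"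
  proof
    assume "length Q = 1" then have "hd Q = last Q" by (cases Q) auto
    then show False using assms by simp
  qed
  moreover have "length Q \<ge> 3 \<Longrightarrow> length Q mod 3 \<noteq> 0"
    using assms unfolding NC_def cyc_def by (metis insert_commute)
  ultimately show ?thesis using assms(7) by (cases "length Q") (auto, presburger)
qed

lemma c4_TPa:
  assumes E': "E' = E \<union> {{a, b}, {b, c}, {c, d}, {d, a}, {a, x}, {c, y}}" and wf: "wfg V E"
    and new: "a \<notin> V" "b \<notin> V" "c \<notin> V" "d \<notin> V" and dist: "distinct [a, b, c, d]" and xy: "x \<in> V" "y \<in> V"
    "x \<noteq> y" "{x, y} \<in> E" and nc: "NC V E"
    and P: "distinct P" "walk E' P" "set P \<subseteq> V \<union> {a, b, c, d}" "P = b # a # P2" "last P = d"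
  shows "length P mod 3 \<noteq> 1"
proof -
  have "P2 \<noteq> []" using P(4,5) dist by auto
  have w2: "walk E' P2" and ea: "{a, hd P2} \<in> E'" using P(2) \<open>P2 \<noteq> []\<close> unfolding P(4) by (auto simp: walk_Cons)
  have "hd P2 \<noteq> b" using P(1,4) \<open>P2 \<noteq> []\<close> by (auto dest: hd_in_set)
  have "{a, hd P2} \<notin> E" using wf_edge[OF wf] new by blast
  then have "hd P2 = d \<or> hd P2 = x" using ea E' \<open>hd P2 \<noteq> b\<close> dist new xy by (auto simp: doubleton_eq_iff)
  then show ?thesis
  proof
    assume "hd P2 = d"
    then obtain P3 where "P2 = d # P3" using \<open>P2 \<noteq> []\<close> by (cases P2) auto
    moreover have "last (d # P3) = d" using P(4,5) calculation by simp
    ultimately have "P3 = []" using P(1,4) last_distinct_Cons[of d P3] by simp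
    then show ?thesis using P(4) \<open>P2 = d # P3\<close> by simp
  next
    assume hx: "hd P2 = x"
    have d2: "distinct P2" "a \<notin> set P2" "b \<notin> set P2" "set P2 \<subseteq> V \<union> {a, b, c, d}" using P(1,3,4) by auto
    have "last P2 = d" using P(4,5) \<open>P2 \<noteq> []\<close> by simp
    then have "\<not> set P2 \<subseteq> V" using \<open>P2 \<noteq> []\<close> new last_in_set by fastforce
    then obtain Q rest where Q: "P2 = Q @ c # rest" "set Q \<subseteq> V" "Q \<noteq> []" "hd Q = x" "last Q = y" "walk E Q" "distinct Q"
      using c4_core[OF E' wf new dist xy(1,2) w2 d2(1,4,2,3) \<open>P2 \<noteq> []\<close> hx] by blast
    have "rest \<noteq> []" using \<open>last P2 = d\<close> Q(1) dist by auto
    have "{c, hd rest} \<in> E'" using w2 \<open>rest \<noteq> []\<close> unfolding Q(1) walk_append by (simp add: walk_Cons)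
    moreover have "{c, hd rest} \<notin> E" using wf_edge[OF wf] new by blast
    moreover have "hd rest \<noteq> b" using d2(3) Q(1) \<open>rest \<noteq> []\<close> by (auto dest: hd_in_set)
    moreover have "hd rest \<noteq> y"
    proof -
      have "last Q \<in> set Q" "hd rest \<in> set rest" using Q(3) \<open>rest \<noteq> []\<close> by simp_all
      moreover have "distinct (Q @ c # rest)" using d2(1) Q(1) by simp
      then have "set Q \<inter> set rest = {}" by simp
      ultimately show ?thesis using Q(5) by (metis disjoint_iff)
    qed
    ultimately have "hd rest = d" using E' dist new xy by (auto simp: doubleton_eq_iff)
    then obtain rest' where "rest = d # rest'" using \<open>rest \<noteq> []\<close> by (cases rest) auto
    moreover have "distinct (d # rest')" using d2(1) Q(1) calculation by simp
    moreover have "last (d # rest') = d" using \<open>last P2 = d\<close> Q(1) calculation by simp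
    ultimately have "rest = [d]" using last_distinct_Cons by metis
    moreover have "length Q mod 3 \<noteq> 0" using c4_Q[OF nc xy(4,3) Q(6,7,2,3,4,5)] .
    ultimately show ?thesis using P(4) Q(1) by simp presburger
  qed
qed

lemma c4_NCa:
  assumes E': "E' = E \<union> {{a, b}, {b, c}, {c, d}, {d, a}, {a, x}, {c, y}}" and wf: "wfg V E"
    and new: "a \<notin> V" "b \<notin> V" "c \<notin> V" "d \<notin> V" and dist: "distinct [a, b, c, d]" and xy: "x \<in> V" "y \<in> V"
    "x \<noteq> y" "{x, y} \<in> E" and nc: "NC V E"
    and P: "cyc V' E' (b # R)" "hd R = a" "last R = c" and V': "V' = V \<union> {a, b, c, d}"
  shows "length (b # R) mod 3 \<noteq> 0"
proof -
  have Rp: "walk E' R" "distinct R" "b \<notin> set R" "set R \<subseteq> V'" "R \<noteq> []" using cyc_parts[OF P(1)] by auto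
  obtain R2 where R: "R = a # R2" using P(2) Rp(5) by (cases R) auto
  have "R2 \<noteq> []" using P(3) R dist by auto
  have w2: "walk E' R2" and ea: "{a, hd R2} \<in> E'" using Rp(1) \<open>R2 \<noteq> []\<close> unfolding R by (auto simp: walk_Cons)
  have "hd R2 \<noteq> b" using Rp(3) R \<open>R2 \<noteq> []\<close> by (auto dest: hd_in_set)
  have "{a, hd R2} \<notin> E" using wf_edge[OF wf] new by blast
  then have "hd R2 = d \<or> hd R2 = x" using ea E' \<open>hd R2 \<noteq> b\<close> dist new xy by (auto simp: doubleton_eq_iff)
  then show ?thesis
  proof
    assume "hd R2 = d"
    then obtain R3 where R3: "R2 = d # R3" using \<open>R2 \<noteq> []\<close> by (cases R2) auto
    have "R3 \<noteq> []" using P(3) R R3 dist by auto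
    have "{d, hd R3} \<in> E'" using w2 \<open>R3 \<noteq> []\<close> unfolding R3 by (simp add: walk_Cons)
    moreover have "{d, hd R3} \<notin> E" using wf_edge[OF wf] new by blast
    moreover have "hd R3 \<noteq> a" using Rp(2) R R3 \<open>R3 \<noteq> []\<close> by (auto dest: hd_in_set)
    ultimately have "hd R3 = c" using E' dist new xy by (auto simp: doubleton_eq_iff)
    then obtain R4 where R4: "R3 = c # R4" using \<open>R3 \<noteq> []\<close> by (cases R3) auto
    have "distinct (c # R4)" "last (c # R4) = c" using Rp(2) P(3) R R3 R4 by auto
    then have "R4 = []" using last_distinct_Cons by metis
    then show ?thesis using R R3 R4 by simp
  next
    assume hx: "hd R2 = x"
    have d2: "distinct R2" "a \<notin> set R2" "b \<notin> set R2" "set R2 \<subseteq> V \<union> {a, b, c, d}" using Rp R V' by auto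
    have "last R2 = c" using P(3) R \<open>R2 \<noteq> []\<close> by simp
    then have "\<not> set R2 \<subseteq> V" using \<open>R2 \<noteq> []\<close> new last_in_set by fastforce
    then obtain Q rest where Q: "R2 = Q @ c # rest" "set Q \<subseteq> V" "Q \<noteq> []" "hd Q = x" "last Q = y" "walk E Q" "distinct Q"
      using c4_core[OF E' wf new dist xy(1,2) w2 d2(1,4,2,3) \<open>R2 \<noteq> []\<close> hx] by blast
    have "distinct (c # rest)" "last (c # rest) = c" using d2(1) Q(1) \<open>last R2 = c\<close> by auto
    then have "rest = []" using last_distinct_Cons by metis
    moreover have "length Q mod 3 \<noteq> 0" using c4_Q[OF nc xy(4,3) Q(6,7,2,3,4,5)] .
    ultimately show ?thesis using R Q(1) by simp
  qed
qed



lemma step_c4: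
  assumes I: "Inv V E r" and r: "r \<in> V" and xy: "x \<in> V" "y \<in> V" "distinct [r, x, y]"
    "degree E x = 2" "degree E y = 2" "{x, y} \<in> E"
    and dist: "distinct [a, b, c, d]" and new: "a \<notin> V" "b \<notin> V" "c \<notin> V" "d \<notin> V"
  shows "Inv (V \<union> {a, b, c, d}) (E \<union> {{a, b}, {b, c}, {c, d}, {d, a}, {a, x}, {c, y}}) r"
proof -
  let ?V = "V \<union> {a, b, c, d}" and ?E = "E \<union> {{a, b}, {b, c}, {c, d}, {d, a}, {a, x}, {c, y}}"
  obtain t1 t2 where wf: "wfg V E" and md: "\<forall>u\<in>V. 2 \<le> degree E u" and nc: "NC V E"
    and T: "t1 \<noteq> t2" "{u\<in>V. u \<noteq> r \<and> degree E u = 2} = {t1, t2}" "{t1, t2} \<notin> E \<longrightarrow> TP V E t1 t2"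
    using I unfolding Inv_def by blast
  have xyT: "{x, y} = {t1, t2}" using terminals_eq[OF T(2) xy(1-5)] .
  have ne: "x \<noteq> a" "x \<noteq> b" "x \<noteq> c" "x \<noteq> d" "y \<noteq> a" "y \<noteq> b" "y \<noteq> c" "y \<noteq> d"
    "r \<noteq> a" "r \<noteq> b" "r \<noteq> c" "r \<noteq> d" "x \<noteq> y" using xy new r by auto
  have wf': "wfg ?V ?E" unfolding wfg_def
  proof (intro conjI ballI)
    show "finite ?V" using wf by (simp add: wfg_def)
  next
    fix e assume "e \<in> ?E"
    then show "\<exists>u w. e = {u, w} \<and> u \<noteq> w \<and> u \<in> ?V \<and> w \<in> ?V"
    proof
      assume "e \<in> E" then show ?thesis using wf unfolding wfg_def by blast
    next
      assume "e \<in> {{a, b}, {b, c}, {c, d}, {d, a}, {a, x}, {c, y}}" then show ?thesis using xy dist ne by auto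
    qed
  qed
  have old: "\<forall>u w. u \<in> V \<longrightarrow> w \<in> V \<longrightarrow> {u, w} \<in> ?E \<longrightarrow> {u, w} \<in> E"
    using new by (auto simp: doubleton_eq_iff)
  have na: "nbrs ?E a = {b, d, x}" using wf_edge[OF wf] new ne dist by (auto simp: nbrs_def doubleton_eq_iff)
  have nb: "nbrs ?E b = {a, c}" using wf_edge[OF wf] new ne dist by (auto simp: nbrs_def doubleton_eq_iff)
  have nc_: "nbrs ?E c = {b, d, y}" using wf_edge[OF wf] new ne dist by (auto simp: nbrs_def doubleton_eq_iff)
  have nd: "nbrs ?E d = {a, c}" using wf_edge[OF wf] new ne dist by (auto simp: nbrs_def doubleton_eq_iff)
  have nx: "nbrs ?E x = insert a (nbrs E x)" using wf_edge[OF wf] new ne dist by (auto simp: nbrs_def doubleton_eq_iff)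
  have ny: "nbrs ?E y = insert c (nbrs E y)" using wf_edge[OF wf] new ne dist by (auto simp: nbrs_def doubleton_eq_iff)
  have nu: "nbrs ?E u = nbrs E u" if "u \<in> V" "u \<noteq> x" "u \<noteq> y" for u
    using that new by (auto simp: nbrs_def doubleton_eq_iff)
  have "a \<notin> nbrs E x" "c \<notin> nbrs E y" using wf_nbrs[OF wf] new by auto
  then have dx: "degree ?E x = 3" and dy: "degree ?E y = 3"
    using xy nx ny wf_nbrs_finite[OF wf] by (auto simp: degree_def)
  have da: "degree ?E a = 3" and dc: "degree ?E c = 3" using na nc_ ne dist by (auto simp: degree_def)
  have db: "degree ?E b = 2" and dd: "degree ?E d = 2" using nb nd ne dist by (auto simp: degree_def)
  have du: "degree ?E u = degree E u" if "u \<in> V" "u \<noteq> x" "u \<noteq> y" for u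
    using nu[OF that] by (simp add: degree_def)
  have md': "\<forall>u\<in>?V. 2 \<le> degree ?E u"
  proof
    fix u assume "u \<in> ?V"
    then show "2 \<le> degree ?E u" using md dx dy da db dc dd du[of u] by (cases "u = x \<or> u = y") auto
  qed
  have T': "{u\<in>?V. u \<noteq> r \<and> degree ?E u = 2} = {b, d}"
  proof (intro equalityI subsetI)
    fix u assume u: "u \<in> {u\<in>?V. u \<noteq> r \<and> degree ?E u = 2}"
    show "u \<in> {b, d}"
    proof (rule ccontr)
      assume "u \<notin> {b, d}"
      then have "u \<in> V" "u \<noteq> x" "u \<noteq> y" using u dx dy da dc by auto
      then have "u \<in> {t1, t2}" using u du T(2) by auto
      then show False using xyT \<open>u \<noteq> x\<close> \<open>u \<noteq> y\<close> by auto
    qed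
  next
    fix u assume "u \<in> {b, d}"
    then show "u \<in> {u\<in>?V. u \<noteq> r \<and> degree ?E u = 2}" using db dd ne by auto
  qed
  have nbd: "{b, d} \<notin> ?E" using wf_edge[OF wf] new dist by (auto simp: doubleton_eq_iff)
  have sym: "?E = E \<union> {{c, b}, {b, a}, {a, d}, {d, c}, {c, y}, {a, x}}" by auto
  have sym2: "?E = E \<union> {{a, d}, {d, c}, {c, b}, {b, a}, {a, x}, {c, y}}" by auto
  have symV: "?V = V \<union> {c, b, a, d}" "?V = V \<union> {a, d, c, b}" by auto
  have dist2: "distinct [c, b, a, d]" "distinct [a, d, c, b]" using dist by auto
  have yx: "{y, x} \<in> E" using xy(6) by (simp add: insert_commute)
  have tp: "TP ?V ?E b d" unfolding TP_def
  proof (intro allI impI)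
    fix P assume P: "distinct P" "walk ?E P" "set P \<subseteq> ?V" "P \<noteq> []" "hd P = b" "last P = d"
    obtain P1 where P1: "P = b # P1" using P(4,5) by (cases P) auto
    have "P1 \<noteq> []" using P(6) P1 dist by auto
    have "{b, hd P1} \<in> ?E" using P(2) P1 \<open>P1 \<noteq> []\<close> by (simp add: walk_Cons)
    then have "hd P1 \<in> {a, c}" unfolding nb[symmetric] nbrs_iff .
    then have "hd P1 = a \<or> hd P1 = c" by simp
    then show "length P mod 3 \<noteq> 1"
    proof
      assume "hd P1 = a"
      then obtain P2 where "P1 = a # P2" using \<open>P1 \<noteq> []\<close> by (cases P1) auto
      then show ?thesis using c4_TPa[OF refl wf new dist xy(1,2) ne(13) xy(6) nc P(1,2,3)] P1 P(6) by simp
    next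
      assume "hd P1 = c"
      then obtain P2 where "P1 = c # P2" using \<open>P1 \<noteq> []\<close> by (cases P1) auto
      then show ?thesis
        using c4_TPa[OF sym wf new(3,2,1,4) dist2(1) xy(2,1) ne(13)[symmetric] yx nc P(1,2)] P(3) symV(1) P1 P(6)
        by simp
    qed
  qed
  have nc': "NC ?V ?E" unfolding NC_def
  proof (intro allI impI)
    fix cs assume c: "cyc ?V ?E cs"
    show "length cs mod 3 \<noteq> 0"
    proof (cases "set cs \<subseteq> V")
      case True
      then show ?thesis using cyc_restrict[OF c True old] nc by (auto simp: NC_def)
    next
      case False
      show ?thesis
      proof (cases "b \<in> set cs")
        case True
        obtain R where R: "cyc ?V ?E (b # R)" "hd R = a" "last R = c" "length R + 1 = length cs"
          using cyc_oriented[OF c True nb] by blast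
        show ?thesis using c4_NCa[OF refl wf new dist xy(1,2) ne(13) xy(6) nc R(1-3) refl] R(4) by simp
      next
        case nb_: False
        show ?thesis
        proof (cases "d \<in> set cs")
          case True
          obtain R where R: "cyc ?V ?E (d # R)" "hd R = a" "last R = c" "length R + 1 = length cs"
            using cyc_oriented[OF c True nd] by blast
          show ?thesis using c4_NCa[OF sym2 wf new(1,4,3,2) dist2(2) xy(1,2) ne(13) xy(6) nc _ R(2,3) symV(2)] R(1,4)
            by simp
        next
          case nd_: False
          have "a \<in> set cs \<or> c \<in> set cs" using False nb_ nd_ c by (auto simp: cyc_def)
          then show ?thesis
          proof
            assume "a \<in> set cs"
            then obtain R where R: "cyc ?V ?E (a # R)" "set (a # R) = set cs" using cyc_rotate_to[OF c] by blast
            have n: "{a, hd R} \<in> ?E" "{a, last R} \<in> ?E" "hd R \<noteq> last R" "R \<noteq> []" using cyc_nbrs[OF R(1)] by auto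
            have "set R \<subseteq> set cs" using R(2) by (metis set_subset_Cons)
            then have "hd R \<in> set cs" "last R \<in> set cs" using n(4) hd_in_set last_in_set by blast+
            then have "hd R \<noteq> b" "hd R \<noteq> d" "last R \<noteq> b" "last R \<noteq> d" using nb_ nd_ by auto
            moreover have "hd R \<in> {b, d, x}" unfolding na[symmetric] nbrs_iff by (rule n(1))
            moreover have "last R \<in> {b, d, x}" unfolding na[symmetric] nbrs_iff by (rule n(2))
            ultimately have False using n(3) by auto
            then show ?thesis by simp
          next
            assume "c \<in> set cs"
            then obtain R where R: "cyc ?V ?E (c # R)" "set (c # R) = set cs" using cyc_rotate_to[OF c] by blast
            have n: "{c, hd R} \<in> ?E" "{c, last R} \<in> ?E" "hd R \<noteq> last R" "R \<noteq> []" using cyc_nbrs[OF R(1)] by auto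
            have "set R \<subseteq> set cs" using R(2) by (metis set_subset_Cons)
            then have "hd R \<in> set cs" "last R \<in> set cs" using n(4) hd_in_set last_in_set by blast+
            then have "hd R \<noteq> b" "hd R \<noteq> d" "last R \<noteq> b" "last R \<noteq> d" using nb_ nd_ by auto
            moreover have "hd R \<in> {b, d, y}" unfolding nc_[symmetric] nbrs_iff by (rule n(1))
            moreover have "last R \<in> {b, d, y}" unfolding nc_[symmetric] nbrs_iff by (rule n(2))
            ultimately have False using n(3) by auto
            then show ?thesis by simp
          qed
        qed
      qed
    qed
  qed
  have "b \<noteq> d" using dist by simp
  have "\<exists>t1 t2. t1 \<noteq> t2 \<and> {u\<in>?V. u \<noteq> r \<and> degree ?E u = 2} = {t1, t2} \<and> ({t1, t2} \<notin> ?E \<longrightarrow> TP ?V ?E t1 t2)"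
    using T' tp \<open>b \<noteq> d\<close> by blast
  then show ?thesis unfolding Inv_def using wf' md' nc' by blast
qed


lemma exc_inv: "exc_seq V E r \<Longrightarrow> r \<in> V \<longrightarrow> degree E r = 2 \<longrightarrow> Inv V E r"
proof (induction rule: exc_seq.induct)
  case (base a1 a2 b1 b2 b3 r)
  show ?case
  proof (intro impI)
    assume "r \<in> {a1, a2, b1, b2, b3}" "degree (K23_edges a1 a2 b1 b2 b3) r = 2"
    then show "Inv {a1, a2, b1, b2, b3} (K23_edges a1 a2 b1 b2 b3) r" using base_inv[OF base] by blast
  qed
next
  case (path3 V E r x y a b)
  have I: "Inv V E r" using path3 by blast
  have h: "r \<in> V" "x \<in> V" "y \<in> V" "distinct [r, x, y]" "degree E x = 2" "degree E y = 2" "{x, y} \<notin> E"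
    "a \<notin> V" "b \<notin> V" "a \<noteq> b" using path3 by blast+
  show ?case using step_path3[OF I h] by blast
next
  case (twin V E r x y w v)
  have I: "Inv V E r" using twin by blast
  have h: "r \<in> V" "x \<in> V" "y \<in> V" "distinct [r, x, y]" "degree E x = 2" "degree E y = 2" "{x, y} \<in> E"
    "w \<in> {x, y}" "v \<notin> V" using twin by blast+
  show ?case
  proof (cases "w = x")
    case True
    then show ?thesis using step_twin[OF I h(1,2,3,4,5,6,7,9)] by blast
  next
    case False
    then have "w = y" using h(8) by blast
    moreover have "distinct [r, y, x]" "{y, x} \<in> E" using h(4,7) by (auto simp: insert_commute)
    ultimately show ?thesis using step_twin[OF I h(1,3,2) _ h(6,5) _ h(9)] by blast
  qed
next
  case (cycle4 V E r x y a b c d)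
  have I: "Inv V E r" using cycle4 by blast
  have h: "r \<in> V" "x \<in> V" "y \<in> V" "distinct [r, x, y]" "degree E x = 2" "degree E y = 2" "{x, y} \<in> E"
    "distinct [a, b, c, d]" "a \<notin> V" "b \<notin> V" "c \<notin> V" "d \<notin> V" using cycle4 by blast+
  show ?case using step_c4[OF I h] by blast
qed

theorem lemma3p3:
  fixes V :: "'a set" and E :: "'a set set"
  assumes "exceptional V E"
  shows "\<not> (\<exists>cs. is_cycle V E cs \<and> 3 dvd length cs)"
proof
  assume "\<exists>cs. is_cycle V E cs \<and> 3 dvd length cs"
  then obtain cs where cs: "is_cycle V E cs" "3 dvd length cs" by blast
  obtain r where "exceptional_root V E r" using assms unfolding exceptional_def by blast
  then have ex: "exc_seq V E r" "r \<in> V" "degree E r = 2" unfolding exceptional_root_def by blast+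
  have "Inv V E r" using exc_inv[OF ex(1)] ex(2,3) by simp
  then have "NC V E" unfolding Inv_def by blast
  then have "length cs mod 3 \<noteq> 0" using is_cycle_cyc[OF cs(1)] unfolding NC_def by blast
  then show False using cs(2) by presburger
qed

end
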